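(* Let $k$ be a field, let $M$ be an $n$-dimensional vector space over $k$ with basis $\{m_1,\dots,m_n\}$, and let $\phi:\{1,\dots,n\}\to\{1,\dots,n\}$ be a function with $\phi^2=\phi$. Define $R^\phi:M\otimes M\to M\otimes M$ by $$R^\phi(m_i\otimes m_j)=\delta_{ij}\,\delta_{i\in \mathrm{Im}(\phi)}\sum_{a,b\in\phi^{-1}(i)} m_a\otimes m_b$$ for all $i,j=1,\dots,n$, where $\delta_{i\in\mathrm{Im}(\phi)}$ equals $1$ if $i\in\mathrm{Im}(\phi)$ and $0$ otherwise. Then $R:=R^\phi$ is symmetric and satisfies $$R^{12}R^{13}=R^{13}R^{12}=R^{12}R^{23}=R^{23}R^{12}.$$ In particular, $R^\phi$ is a solution of the Long equation $R^{12}R^{13}=R^{13}R^{12}$, $R^{12}R^{23}=R^{23}R^{12}$.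
   Context: For $R\in\mathrm{End}_k(M\otimes M)$: $R^{12}=R\otimes I$, $R^{23}=I\otimes R$, $R^{13}=(I\otimes\tau)(R\otimes I)(I\otimes\tau)$, where $\tau(m\otimes n)=n\otimes m$ is the flip, and these are viewed in $\mathrm{End}_k(M\otimes M\otimes M)$. $R$ is called symmetric if $R^{12}=R^{21}$, where $R^{21}=\tau R\tau$; in coordinates, writing $R(m_v\otimes m_u)=\sum_{i,j}x^{ji}_{uv}m_i\otimes m_j$, symmetry is expressed as $x^{ji}_{uv}=x^{ji}_{vu}$ for all $i,j,u,v$. *)

theory Defs
  imports "HOL-Analysis.Analysis"
begin

text \<open>M = k^n with basis indexed by the finite type 'n (n = CARD('n)).
 An endomorphism T of M\<otimes>M is represented by its matrix w.r.t. the basis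
 m_i \<otimes> m_j, indexed by pairs: T $ (i,j) $ (u,v) is the coefficient of
 m_i \<otimes> m_j in T(m_u \<otimes> m_v).\<close>

type_synonym ('a,'n) end2 = "'a ^ ('n \<times> 'n) ^ ('n \<times> 'n)"
type_synonym ('a,'n) end3 = "'a ^ ('n \<times> 'n \<times> 'n) ^ ('n \<times> 'n \<times> 'n)"

definition flip :: "('a::field, 'n::finite) end2" where
  "flip = (\<chi> p q. if fst p = snd q \<and> snd p = fst q then 1 else 0)"

definition tensor_I :: "('a::field, 'n::finite) end2 \<Rightarrow> ('a, 'n) end3" where
  "tensor_I R = (\<chi> p q. case p of (a,b,c) \<Rightarrow> case q of (u,v,w) \<Rightarrow>
     R $ (a,b) $ (u,v) * (if c = w then 1 else 0))"

definition I_tensor :: "('a::field, 'n::finite) end2 \<Rightarrow> ('a, 'n) end3" where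
  "I_tensor R = (\<chi> p q. case p of (a,b,c) \<Rightarrow> case q of (u,v,w) \<Rightarrow>
     (if a = u then 1 else 0) * R $ (b,c) $ (v,w))"

definition R12 :: "('a::field, 'n::finite) end2 \<Rightarrow> ('a, 'n) end3" where
  "R12 R = tensor_I R"

definition R23 :: "('a::field, 'n::finite) end2 \<Rightarrow> ('a, 'n) end3" where
  "R23 R = I_tensor R"

definition R13 :: "('a::field, 'n::finite) end2 \<Rightarrow> ('a, 'n) end3" where
  "R13 R = I_tensor flip ** tensor_I R ** I_tensor flip"

definition symmetric_R :: "('a::field, 'n::finite) end2 \<Rightarrow> bool" where
  "symmetric_R R \<longleftrightarrow> flip ** R ** flip = R"

definition Rphi :: "('n::finite \<Rightarrow> 'n) \<Rightarrow> ('a::field, 'n) end2" where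
  "Rphi \<phi> = (\<chi> p q. case p of (a,b) \<Rightarrow> case q of (i,j) \<Rightarrow>
      (if i = j then 1 else 0) * (if i \<in> range \<phi> then 1 else 0) *
      (if \<phi> a = i \<and> \<phi> b = i then 1 else 0))"

end

theory Submission imports Defs begin

lemma Iflip_e: "(I_tensor (flip :: ('a::field,'n::finite) end2)) $ (a,b,c) $ k = (if k = (a,c,b) then 1 else 0)"
  by (cases k) (auto simp: I_tensor_def flip_def)

lemma Iflip_e2: "(I_tensor (flip :: ('a::field,'n::finite) end2)) $ k $ (a,b,c) = (if k = (a,c,b) then 1 else 0)"
  by (cases k) (auto simp: I_tensor_def flip_def)

lemma Pmult_left: "(I_tensor (flip :: ('a::field,'n::finite) end2) ** T) $ (a,b,c) $ q = T $ (a,c,b) $ q"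
  by (simp add: matrix_matrix_mult_def Iflip_e if_distrib[of "\<lambda>x. x * _"] cong: if_cong)

lemma Pmult_right: "(T ** I_tensor (flip :: ('a::field,'n::finite) end2)) $ p $ (a,b,c) = T $ p $ (a,c,b)"
  by (simp add: matrix_matrix_mult_def Iflip_e2 if_distrib[of "\<lambda>x. _ * x"] cong: if_cong)

context fixes \<phi> :: "'n::finite \<Rightarrow> 'n" assumes idem: "\<phi> \<circ> \<phi> = \<phi>" begin
lemma idem': "\<phi> (\<phi> x) = \<phi> x" using idem by (metis comp_apply)
lemma R_e: "(Rphi \<phi> :: ('a::field,'n) end2) $ (a,b) $ (u,v) = (if u = v \<and> \<phi> a = u \<and> \<phi> b = u then 1 else 0)"
  by (auto simp: Rphi_def idem')
lemma R12_e: "R12 (Rphi \<phi> :: ('a::field,'n) end2) $ (a,b,c) $ (u,v,w) = (if u = v \<and> \<phi> a = u \<and> \<phi> b = u \<and> c = w then 1 else 0)"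
  by (simp add: R12_def tensor_I_def R_e)
lemma R23_e: "R23 (Rphi \<phi> :: ('a::field,'n) end2) $ (a,b,c) $ (u,v,w) = (if a = u \<and> v = w \<and> \<phi> b = v \<and> \<phi> c = v then 1 else 0)"
  by (simp add: R23_def I_tensor_def R_e)
lemma R13_e: "R13 (Rphi \<phi> :: ('a::field,'n) end2) $ (a,b,c) $ (u,v,w) = (if u = w \<and> \<phi> a = u \<and> \<phi> c = u \<and> b = v then 1 else 0)"
  by (simp add: R13_def matrix_mul_assoc Pmult_left Pmult_right R12_def[symmetric] R12_e)

lemma R12_row: "R12 (Rphi \<phi> :: ('a::field,'n) end2) $ (a,b,c) $ k = (if \<phi> a = \<phi> b \<and> k = (\<phi> a, \<phi> a, c) then 1 else 0)"
  by (cases k) (auto simp: R12_e)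
lemma R13_row: "R13 (Rphi \<phi> :: ('a::field,'n) end2) $ (a,b,c) $ k = (if \<phi> a = \<phi> c \<and> k = (\<phi> a, b, \<phi> a) then 1 else 0)"
  by (cases k) (auto simp: R13_e)
lemma R23_row: "R23 (Rphi \<phi> :: ('a::field,'n) end2) $ (a,b,c) $ k = (if \<phi> b = \<phi> c \<and> k = (a, \<phi> b, \<phi> b) then 1 else 0)"
  by (cases k) (auto simp: R23_e)

lemma prod_e:
  fixes A B :: "('a::field,'n) end3"
  assumes "\<And>k. A $ p $ k = (if P \<and> k = k0 then 1 else 0)"
  shows "(A ** B) $ p $ q = (if P then B $ k0 $ q else 0)"
  by (simp add: matrix_matrix_mult_def assms if_distrib[of "\<lambda>x. x * _"] cong: if_cong)
end

theorem proposition3p4: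
  fixes \<phi> :: "'n::finite \<Rightarrow> 'n"
  assumes "\<phi> \<circ> \<phi> = \<phi>"
  defines "R \<equiv> (Rphi \<phi> :: ('a::field, 'n) end2)"
  shows "symmetric_R R \<and>
         R12 R ** R13 R = R13 R ** R12 R \<and>
         R13 R ** R12 R = R12 R ** R23 R \<and>
         R12 R ** R23 R = R23 R ** R12 R"
proof -
  note idem' = idem'[OF assms(1)]
  have sym: "symmetric_R R"
  proof -
    have fl: "(flip :: ('a,'n) end2) $ (a,b) $ k = (if k = (b,a) then 1 else 0)" for a b k
      by (cases k) (auto simp: flip_def)
    have fl2: "(flip :: ('a,'n) end2) $ k $ (a,b) = (if k = (b,a) then 1 else 0)" for a b k
      by (cases k) (auto simp: flip_def)
    have "(flip ** R ** flip) $ (a,b) $ (u,v) = R $ (a,b) $ (u,v)" for a b u v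
      by (simp add: matrix_matrix_mult_def fl fl2 if_distrib[of "\<lambda>x. x * _"] if_distrib[of "\<lambda>x. _ * x"]
          R_def R_e[OF assms(1)] cong: if_cong)
    then show ?thesis unfolding symmetric_R_def
      by (simp add: vec_eq_iff)
  qed
  define T :: "('a,'n) end3" where "T = (\<chi> p q. case p of (a,b,c) \<Rightarrow> case q of (u,v,w) \<Rightarrow>
      if u = v \<and> v = w \<and> \<phi> a = u \<and> \<phi> b = u \<and> \<phi> c = u then 1 else 0)"
  have Te: "T $ (a,b,c) $ (u,v,w) = (if u = v \<and> v = w \<and> \<phi> a = u \<and> \<phi> b = u \<and> \<phi> c = u then 1 else 0)" for a b c u v w
    by (simp add: T_def)
  have e1: "R12 R ** R13 R = T"
  proof (intro vec_eq_iff[THEN iffD2] allI)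
    fix p q :: "'n \<times> 'n \<times> 'n"
    obtain a b c where p: "p = (a,b,c)" by (cases p) auto
    obtain u v w where q: "q = (u,v,w)" by (cases q) auto
    show "(R12 R ** R13 R) $ p $ q = T $ p $ q" unfolding p q R_def Te
      by (simp add: prod_e[OF assms(1) R12_row[OF assms(1)]] R13_e[OF assms(1)]) (metis idem')
  qed
  have e2: "R13 R ** R12 R = T"
  proof (intro vec_eq_iff[THEN iffD2] allI)
    fix p q :: "'n \<times> 'n \<times> 'n"
    obtain a b c where p: "p = (a,b,c)" by (cases p) auto
    obtain u v w where q: "q = (u,v,w)" by (cases q) auto
    show "(R13 R ** R12 R) $ p $ q = T $ p $ q" unfolding p q R_def Te
      by (simp add: prod_e[OF assms(1) R13_row[OF assms(1)]] R12_e[OF assms(1)]) (metis idem')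
  qed
  have e3: "R12 R ** R23 R = T"
  proof (intro vec_eq_iff[THEN iffD2] allI)
    fix p q :: "'n \<times> 'n \<times> 'n"
    obtain a b c where p: "p = (a,b,c)" by (cases p) auto
    obtain u v w where q: "q = (u,v,w)" by (cases q) auto
    show "(R12 R ** R23 R) $ p $ q = T $ p $ q" unfolding p q R_def Te
      by (simp add: prod_e[OF assms(1) R12_row[OF assms(1)]] R23_e[OF assms(1)]) (metis idem')
  qed
  have e4: "R23 R ** R12 R = T"
  proof (intro vec_eq_iff[THEN iffD2] allI)
    fix p q :: "'n \<times> 'n \<times> 'n"
    obtain a b c where p: "p = (a,b,c)" by (cases p) auto
    obtain u v w where q: "q = (u,v,w)" by (cases q) auto
    show "(R23 R ** R12 R) $ p $ q = T $ p $ q" unfolding p q R_def Te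
      by (simp add: prod_e[OF assms(1) R23_row[OF assms(1)]] R12_e[OF assms(1)]) (metis idem')
  qed
  show ?thesis using sym e1 e2 e3 e4 by simp
qed

end
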